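(* Let $\mathbf{A}\in\mathbb{R}^{(\ell m)\times(qn)}$ with $\mathcal{E}=(\mathbf{E}_1,\dots,\mathbf{E}_p)$ and $\mathcal{M}_{\mathcal{E}}$ as in the context, and let $\mathcal{T}=[\![\mathbf{X},\mathbf{Y},\mathbf{Z}]\!]\in\mathbb{R}^{m\times p\times n}$ be a CP tensor approximating $\mathcal{T}_{\mathcal{E}}[\mathbf{A}]$, with $\mathbf{X}\in\mathbb{R}^{m\times r}$, $\mathbf{Y}\in\mathbb{R}^{p\times r}$, $\mathbf{Z}\in\mathbb{R}^{n\times r}$, i.e. $\mathcal{T}_{i,k,j}=\sum_{s=1}^r\mathbf{X}_{is}\mathbf{Y}_{ks}\mathbf{Z}_{js}$. Suppose $\mathbf{Y}=\mathbf{F}\mathbf{G}^\top$ with $\mathbf{F}\in\mathbb{R}^{p\times r}$ and $\mathbf{G}\in\mathbb{R}^{r\times r}$. Then \[\mathcal{M}_{\mathcal{E}}[\mathcal{T}]=\sum_{j=1}^r\Big(\sum_{k=1}^p f_{kj}\mathbf{E}_k\Big)\otimes\big(\mathbf{X}\,\mathrm{diag}(\mathbf{G}_{:,j})\,\mathbf{Z}^\top\big),\] a representation as a sum of Kronecker products of matrices.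
   Context: $\mathbf{A}$ is a block matrix with $\ell\times q$ blocks of size $m\times n$, whose blocks take exactly $p$ distinct values $\mathbf{A}_1,\dots,\mathbf{A}_p\in\mathbb{R}^{m\times n}$, $\mathbf{A}_k$ occurring at $\eta_k\ge1$ block positions. $\mathbf{E}_k\in\mathbb{R}^{\ell\times q}$ has $(i,j)$ entry $1/\sqrt{\eta_k}$ if $\mathbf{A}_k$ is the $(i,j)$ block of $\mathbf{A}$ and $0$ otherwise. $\mathcal{T}_{\mathcal{E}}[\mathbf{A}]\in\mathbb{R}^{m\times p\times n}$ has entries $\sqrt{\eta_k}(\mathbf{A}_k)_{ij}$ at position $(i,k,j)$. For $\mathcal{X}\in\mathbb{R}^{m\times p\times n}$, $\mathrm{sq}(\mathcal{X}_{:,k,:})$ is the $m\times n$ matrix with entries $\mathcal{X}_{i,k,j}$ and $\mathcal{M}_{\mathcal{E}}[\mathcal{X}]=\sum_{k=1}^p\mathbf{E}_k\otimes\mathrm{sq}(\mathcal{X}_{:,k,:})$. The Kronecker product $\mathbf{B}\otimes\mathbf{C}$ has $(i,j)$ block $b_{ij}\mathbf{C}$. $f_{kj}$ are the entries of $\mathbf{F}$, $\mathbf{G}_{:,j}$ is the $j$th column of $\mathbf{G}$, and $\mathrm{diag}(\mathbf{v})$ is the diagonal matrix with diagonal $\mathbf{v}$. *)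

theory Defs
  imports "Jordan_Normal_Form.Matrix"
begin

definition kron :: "real mat \<Rightarrow> real mat \<Rightarrow> real mat" where
  "kron B C = mat (dim_row B * dim_row C) (dim_col B * dim_col C)
     (\<lambda>(i,j). B $$ (i div dim_row C, j div dim_col C) * C $$ (i mod dim_row C, j mod dim_col C))"

definition msum :: "nat \<Rightarrow> nat \<Rightarrow> ('i \<Rightarrow> real mat) \<Rightarrow> 'i set \<Rightarrow> real mat" where
  "msum nr nc f I = mat nr nc (\<lambda>(i,j). \<Sum>k\<in>I. f k $$ (i,j))"

definition blk :: "real mat \<Rightarrow> nat \<Rightarrow> nat \<Rightarrow> nat \<Rightarrow> nat \<Rightarrow> real mat" where
  "blk A m n i j = mat m n (\<lambda>(a,b). A $$ (i * m + a, j * n + b))"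

definition eta :: "real mat \<Rightarrow> nat \<Rightarrow> nat \<Rightarrow> nat \<Rightarrow> nat \<Rightarrow> real mat \<Rightarrow> nat" where
  "eta A l q m n Ak = card {(i,j). i < l \<and> j < q \<and> blk A m n i j = Ak}"

definition Emat :: "real mat \<Rightarrow> nat \<Rightarrow> nat \<Rightarrow> nat \<Rightarrow> nat \<Rightarrow> real mat \<Rightarrow> real mat" where
  "Emat A l q m n Ak = mat l q (\<lambda>(i,j).
     if blk A m n i j = Ak then 1 / sqrt (real (eta A l q m n Ak)) else 0)"

text \<open>Third-order tensors in R^(m x p x n) are represented as functions nat => nat => nat => real
  (only indices below the dimensions matter). sq(X_{:,k,:}) is the m x n frontal slice.\<close>
definition sq_slice :: "nat \<Rightarrow> nat \<Rightarrow> (nat \<Rightarrow> nat \<Rightarrow> nat \<Rightarrow> real) \<Rightarrow> nat \<Rightarrow> real mat" where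
  "sq_slice m n X k = mat m n (\<lambda>(i,j). X i k j)"

text \<open>M_E[X] = sum_k E_k (x) sq(X_{:,k,:}), for the family E_1..E_p (indices 0..p-1).\<close>
definition M_E :: "(nat \<Rightarrow> real mat) \<Rightarrow> nat \<Rightarrow> nat \<Rightarrow> nat \<Rightarrow> nat \<Rightarrow> nat \<Rightarrow>
    (nat \<Rightarrow> nat \<Rightarrow> nat \<Rightarrow> real) \<Rightarrow> real mat" where
  "M_E E p l q m n X = msum (l * m) (q * n) (\<lambda>k. kron (E k) (sq_slice m n X k)) {..<p}"

definition cp_tensor :: "real mat \<Rightarrow> real mat \<Rightarrow> real mat \<Rightarrow> nat \<Rightarrow> nat \<Rightarrow> nat \<Rightarrow> real" where
  "cp_tensor X Y Z i k j = (\<Sum>s<dim_col X. X $$ (i,s) * Y $$ (k,s) * Z $$ (j,s))"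

end

theory Submission
  imports Defs
begin

lemma kron_idx: "i < dim_row B * dim_row C \<Longrightarrow> j < dim_col B * dim_col C \<Longrightarrow>
  kron B C $$ (i,j) = B $$ (i div dim_row C, j div dim_col C) * C $$ (i mod dim_row C, j mod dim_col C)"
  by (simp add: kron_def)

lemma msum_idx: "i < nr \<Longrightarrow> j < nc \<Longrightarrow> msum nr nc f I $$ (i,j) = (\<Sum>k\<in>I. f k $$ (i,j))"
  by (simp add: msum_def)

lemma msum_dims[simp]: "dim_row (msum nr nc f I) = nr" "dim_col (msum nr nc f I) = nc"
  by (simp_all add: msum_def)

lemma diag_prod_idx:
  assumes "X \<in> carrier_mat m r" "Z \<in> carrier_mat n r" "a < m" "b < n"
  shows "(X * mat_diag r g * transpose_mat Z) $$ (a,b) = (\<Sum>s<r. X $$ (a,s) * g s * Z $$ (b,s))"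
proof -
  have XD: "(X * mat_diag r g) $$ (a,s) = X $$ (a,s) * g s" if "s < r" for s
  proof -
    have "(X * mat_diag r g) $$ (a,s) = (\<Sum>t<r. X $$ (a,t) * (if t = s then g s else 0))"
      using assms that by (simp add: scalar_prod_def mat_diag_def lessThan_atLeast0 cong: if_cong)
    also have "\<dots> = X $$ (a,s) * g s"
      using that by (subst sum.cong[where h="\<lambda>t. if t = s then X $$ (a,s) * g s else 0"]) auto
    finally show ?thesis .
  qed
  have "(X * mat_diag r g * transpose_mat Z) $$ (a,b) = (\<Sum>s<r. (X * mat_diag r g) $$ (a,s) * Z $$ (b,s))"
    using assms by (auto simp: scalar_prod_def lessThan_atLeast0 mat_diag_def intro!: sum.cong)
  also have "\<dots> = (\<Sum>s<r. X $$ (a,s) * g s * Z $$ (b,s))"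
    by (rule sum.cong) (auto simp: XD)
  finally show ?thesis .
qed

lemma swap3: "(\<Sum>k\<in>K. \<Sum>s\<in>S. \<Sum>t\<in>T. h k s t) = (\<Sum>t\<in>T. \<Sum>k\<in>K. \<Sum>s\<in>S. h k s t)"
proof -
  have "(\<Sum>k\<in>K. \<Sum>s\<in>S. \<Sum>t\<in>T. h k s t) = (\<Sum>k\<in>K. \<Sum>t\<in>T. \<Sum>s\<in>S. h k s t)"
    by (rule sum.cong[OF refl], rule sum.swap)
  also have "\<dots> = (\<Sum>t\<in>T. \<Sum>k\<in>K. \<Sum>s\<in>S. h k s t)" by (rule sum.swap)
  finally show ?thesis .
qed

theorem corollary4p2:
  fixes A :: "real mat" and Av :: "nat \<Rightarrow> real mat"
    and l q m n p r :: nat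
    and X Y Z F G :: "real mat"
  assumes "A \<in> carrier_mat (l * m) (q * n)"
    and "\<And>k. k < p \<Longrightarrow> Av k \<in> carrier_mat m n"
    and "inj_on Av {..<p}"
    and "{blk A m n i j | i j. i < l \<and> j < q} = Av ` {..<p}"
    and "X \<in> carrier_mat m r" and "Y \<in> carrier_mat p r" and "Z \<in> carrier_mat n r"
    and "F \<in> carrier_mat p r" and "G \<in> carrier_mat r r"
    and "Y = F * transpose_mat G"
  shows "M_E (\<lambda>k. Emat A l q m n (Av k)) p l q m n (cp_tensor X Y Z)
       = msum (l * m) (q * n)
           (\<lambda>j. kron (msum l q (\<lambda>k. F $$ (k, j) \<cdot>\<^sub>m Emat A l q m n (Av k)) {..<p})
                     (X * mat_diag r (\<lambda>s. col G j $ s) * transpose_mat Z))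
           {..<r}"
proof (rule eq_matI)
  note X = assms(5) and Z = assms(7) and F = assms(8) and G = assms(9)
  let ?E = "\<lambda>k. Emat A l q m n (Av k)"
  have dimE: "dim_row (?E k) = l" "dim_col (?E k) = q" for k by (simp_all add: Emat_def)
  fix i j assume i: "i < dim_row (msum (l * m) (q * n)
           (\<lambda>j. kron (msum l q (\<lambda>k. F $$ (k, j) \<cdot>\<^sub>m Emat A l q m n (Av k)) {..<p})
                     (X * mat_diag r (\<lambda>s. col G j $ s) * transpose_mat Z))
           {..<r})" and j: "j < dim_col (msum (l * m) (q * n)
           (\<lambda>j. kron (msum l q (\<lambda>k. F $$ (k, j) \<cdot>\<^sub>m Emat A l q m n (Av k)) {..<p})
                     (X * mat_diag r (\<lambda>s. col G j $ s) * transpose_mat Z))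
           {..<r})"
  then have i: "i < l * m" and j: "j < q * n" by (simp_all add: msum_def)
  define I where "I = i div m" define a where "a = i mod m"
  define J where "J = j div n" define b where "b = j mod n"
  have dP: "dim_row (X * mat_diag r g * transpose_mat Z) = m" "dim_col (X * mat_diag r g * transpose_mat Z) = n" for g
    using X Z by auto
  have m0: "m > 0" using i by (cases m) auto
  have n0: "n > 0" using j by (cases n) auto
  have I: "I < l" using i m0 by (simp add: I_def less_mult_imp_div_less)
  have J: "J < q" using j n0 by (simp add: J_def less_mult_imp_div_less)
  have a: "a < m" using m0 by (simp add: a_def)
  have b: "b < n" using n0 by (simp add: b_def)
  have Yks: "Y $$ (k,s) = (\<Sum>t<r. F $$ (k,t) * G $$ (s,t))" if "k < p" "s < r" for k s
    using that F G assms(10) by (simp add: scalar_prod_def lessThan_atLeast0)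
  have "M_E ?E p l q m n (cp_tensor X Y Z) $$ (i,j)
      = (\<Sum>k<p. ?E k $$ (I,J) * (\<Sum>s<r. X $$ (a,s) * Y $$ (k,s) * Z $$ (b,s)))"
    unfolding M_E_def using i j X a b
    by (simp add: msum_idx kron_idx dimE sq_slice_def cp_tensor_def I_def J_def a_def b_def)
  also have "\<dots> = (\<Sum>k<p. \<Sum>s<r. \<Sum>t<r. ?E k $$ (I,J) * F $$ (k,t) * X $$ (a,s) * G $$ (s,t) * Z $$ (b,s))"
    by (rule sum.cong[OF refl], simp add: Yks sum_distrib_left sum_distrib_right mult_ac)
  also have "\<dots> = (\<Sum>t<r. \<Sum>k<p. \<Sum>s<r. ?E k $$ (I,J) * F $$ (k,t) * X $$ (a,s) * G $$ (s,t) * Z $$ (b,s))"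
    by (rule swap3)
  also have "\<dots> = (\<Sum>t<r. (\<Sum>k<p. F $$ (k,t) * ?E k $$ (I,J)) * (\<Sum>s<r. X $$ (a,s) * G $$ (s,t) * Z $$ (b,s)))"
    by (simp add: sum_distrib_left sum_distrib_right mult_ac)
  also have "\<dots> = (\<Sum>t<r. msum l q (\<lambda>k. F $$ (k, t) \<cdot>\<^sub>m Emat A l q m n (Av k)) {..<p} $$ (I,J)
      * (X * mat_diag r (\<lambda>s. col G t $ s) * transpose_mat Z) $$ (a,b))"
  proof (rule sum.cong[OF refl])
    fix t assume t: "t \<in> {..<r}"
    have 1: "(X * mat_diag r (\<lambda>s. col G t $ s) * transpose_mat Z) $$ (a,b)
        = (\<Sum>s<r. X $$ (a,s) * G $$ (s,t) * Z $$ (b,s))"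
      unfolding diag_prod_idx[OF X Z a b] using G t by (auto intro!: sum.cong)
    have 2: "msum l q (\<lambda>k. F $$ (k, t) \<cdot>\<^sub>m Emat A l q m n (Av k)) {..<p} $$ (I,J)
        = (\<Sum>k<p. F $$ (k,t) * ?E k $$ (I,J))"
      using I J by (simp add: msum_idx dimE)
    show "(\<Sum>k<p. F $$ (k,t) * ?E k $$ (I,J)) * (\<Sum>s<r. X $$ (a,s) * G $$ (s,t) * Z $$ (b,s))
      = msum l q (\<lambda>k. F $$ (k, t) \<cdot>\<^sub>m Emat A l q m n (Av k)) {..<p} $$ (I,J)
      * (X * mat_diag r (\<lambda>s. col G t $ s) * transpose_mat Z) $$ (a,b)"
      by (simp only: 1 2)
  qed
  also have "\<dots> = msum (l * m) (q * n)
           (\<lambda>j. kron (msum l q (\<lambda>k. F $$ (k, j) \<cdot>\<^sub>m Emat A l q m n (Av k)) {..<p})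
                     (X * mat_diag r (\<lambda>s. col G j $ s) * transpose_mat Z))
           {..<r} $$ (i,j)"
    using i j dP
    by (simp add: msum_idx kron_idx I_def J_def a_def b_def del: index_mult_mat)
  finally show "M_E ?E p l q m n (cp_tensor X Y Z) $$ (i,j) = msum (l * m) (q * n)
           (\<lambda>j. kron (msum l q (\<lambda>k. F $$ (k, j) \<cdot>\<^sub>m Emat A l q m n (Av k)) {..<p})
                     (X * mat_diag r (\<lambda>s. col G j $ s) * transpose_mat Z))
           {..<r} $$ (i,j)" .
qed (simp_all add: M_E_def msum_def)

end
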